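(* Assume (A0), (A1), (A2'), (A3), and suppose $r(x,a,\mu)=r_0(x,\mu)$ does not depend on $a$, and $T(x,a,\mu,z,z^0)=T_0(x,a,z)$ depends neither on $\mu$ nor on the common noise. Let $\mu^*\in\mathbb P(S)$ be a maximizer of $\tilde r(\mu):=\int_S r_0(x,\mu)\mu(dx)$ over $\mathbb P(S)$. Suppose there exists a stochastic kernel $\bar Q^*$ from $S$ to $A$ with $\bar Q^*(D(x)|x)=1$ for all $x$ such that $\mu^*$ is a stationary distribution of $P^{\bar Q^*}$ and $P^{\bar Q^*}$ is Wasserstein ergodic. Then the stationary policy $\psi^*=(\varphi^*,\varphi^*,\dots)$ with $\varphi^*(\mu):=\mu\otimes\bar Q^*$ is average reward optimal in the limit MDP; indeed $G_{\psi^*}(\mu)=\tilde r(\mu^* )=G(\mu)$ for all $\mu\in\mathbb P(S)$.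
   Context: $S$ is a compact subset of $\mathbb R^k$ (metric $|x-y|$), $A$ a Borel set, $D(x)\subset A$, $D:=\{(x,a):x\in S,a\in D(x)\}$ containing the graph of a measurable map $S\to A$; $\mathbb P(S)$, $\mathbb P(D)$ have the weak topology. $Z$ is a random variable with law $\mathbb P^Z$ on a Borel set $\mathcal Z$; $r:S\times A\times\mathbb P(S)\to\mathbb R$ bounded. Without common noise and with $T=T_0$, the limit MDP has admissible actions $\tilde D(\mu):=\{Q\in\mathbb P(D):\text{first marginal }\mu\}$, reward $\int_Dr(x,a,\mu)Q(d(x,a))=\tilde r(\mu)$, and deterministic transition $\mu_{k+1}(B)=\int_S\int_A p^{x,a}(B)\bar Q_k(da|x)\mu_k(dx)$, where $p^{x,a}(B):=\mathbb P(T_0(x,a,Z)\in B)$ and $Q_k=\mu_k\otimes\bar Q_k$ is the chosen action ($\mu\otimes\bar Q$ denotes the measure $Q(B)=\int\int 1_B(x,a)\bar Q(da|x)\mu(dx)$). For a kernel $\bar Q$, $P^{\bar Q}(B|x):=\int p^{x,a}(B)\bar Q(da|x)$; $\mu^*$ is stationary if $\mu^*=\int P^{\bar Q^*}(\cdot|x)\mu^*(dx)$. Policies $\psi=(\varphi_n)$ are measurable $\varphi_n:\mathbb P(S)\to\mathbb P(D)$ with $\varphi_n(\mu)\in\tilde D(\mu)$; average reward $G_\psi(\mu):=\liminf_n\frac1n\sum_{k<n}\tilde r(\mu_k)$, $G:=\sup_\psi G_\psi$. Wasserstein distance: $W(\mu,\nu):=\sup\{|\int f\,d\nu-\int f\,d\mu|: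 f\text{ with }|f(x)-f(y)|\le|x-y|\}$. A kernel $P$ on $S$ is Wasserstein ergodic if there exist $\rho\in(0,1)$, $C>0$ with $\sup_{x\ne y}W(P^n(\cdot|x),P^n(\cdot|y))/|x-y|\le C\rho^n$ for all $n\in\mathbb N$. Assumptions: (A0) $D$ compact. (A1) If $x_n\to x$ and $a_n\in D(x_n)$, then $(a_n)$ has an accumulation point in $D(x)$. (A2') $r$ continuous in $(x,a,\mu)$. (A3) $T$ continuous in $(x,a,\mu)$ for fixed noise values. *)

theory Defs
  imports "HOL-Probability.Probability"
begin

definition PS :: "'x::euclidean_space set \<Rightarrow> 'x measure set" where
  "PS S = {\<mu>. prob_space \<mu> \<and> sets \<mu> = sets borel \<and> emeasure \<mu> S = 1}"

definition Dset :: "'x set \<Rightarrow> ('x \<Rightarrow> 'b set) \<Rightarrow> ('x \<times> 'b) set" where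
  "Dset S Dx = {(x, a). x \<in> S \<and> a \<in> Dx x}"

definition PD :: "('x::euclidean_space \<times> 'b::euclidean_space) set \<Rightarrow> ('x \<times> 'b) measure set" where
  "PD D = {Q. prob_space Q \<and> sets Q = sets borel \<and> emeasure Q D = 1}"

text \<open>Admissible actions of the limit MDP: elements of P(D) with first marginal mu.\<close>
definition Dtilde :: "'x::euclidean_space set \<Rightarrow> ('x \<Rightarrow> 'b::euclidean_space set) \<Rightarrow> 'x measure
    \<Rightarrow> ('x \<times> 'b) measure set" where
  "Dtilde S Dx \<mu> = {Q \<in> PD (Dset S Dx). distr Q borel fst = \<mu>}"

definition weak_conv_on :: "'x::euclidean_space set \<Rightarrow> (nat \<Rightarrow> 'x measure) \<Rightarrow> 'x measure \<Rightarrow> bool" where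
  "weak_conv_on S \<mu>s \<mu> \<longleftrightarrow>
     (\<forall>f. continuous_on S f \<longrightarrow>
        (\<lambda>n. (LINT x:S|\<mu>s n. f x)) \<longlonglongrightarrow> (LINT x:S|\<mu>. (f x :: real)))"

definition pZ :: "('x \<Rightarrow> 'b \<Rightarrow> 'z \<Rightarrow> 'x::euclidean_space) \<Rightarrow> 'z measure \<Rightarrow> 'x \<Rightarrow> 'b \<Rightarrow> 'x measure" where
  "pZ T0 PZ x a = distr PZ borel (T0 x a)"

definition trans_mu :: "'x::euclidean_space set \<Rightarrow> ('x \<Rightarrow> 'b::euclidean_space set)
    \<Rightarrow> ('x \<Rightarrow> 'b \<Rightarrow> 'z \<Rightarrow> 'x) \<Rightarrow> 'z measure \<Rightarrow> ('x \<times> 'b) measure \<Rightarrow> 'x measure" where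
  "trans_mu S Dx T0 PZ Q = measure_of UNIV (sets borel)
     (\<lambda>B. \<integral>\<^sup>+ y. indicator (Dset S Dx) y * emeasure (pZ T0 PZ (fst y) (snd y)) B \<partial>Q)"

definition rtilde :: "'x::euclidean_space set \<Rightarrow> ('x \<Rightarrow> 'x measure \<Rightarrow> real) \<Rightarrow> 'x measure \<Rightarrow> real" where
  "rtilde S r0 \<mu> = (LINT x:S|\<mu>. r0 x \<mu>)"

text \<open>The sigma-algebra on P(S) resp. P(D) is the one generated by
  the evaluations mu |-> mu(B) (Giry monad), i.e. the Borel sigma-algebra of the weak topology.\<close>
definition is_policy :: "'x::euclidean_space set \<Rightarrow> ('x \<Rightarrow> 'b::euclidean_space set)
    \<Rightarrow> (nat \<Rightarrow> 'x measure \<Rightarrow> ('x \<times> 'b) measure) \<Rightarrow> bool" where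
  "is_policy S Dx \<psi> \<longleftrightarrow>
     (\<forall>n. \<psi> n \<in> measurable (restrict_space (subprob_algebra borel) (PS S)) (subprob_algebra borel)
        \<and> (\<forall>\<mu>\<in>PS S. \<psi> n \<mu> \<in> Dtilde S Dx \<mu>))"

primrec traj :: "'x::euclidean_space set \<Rightarrow> ('x \<Rightarrow> 'b::euclidean_space set)
    \<Rightarrow> ('x \<Rightarrow> 'b \<Rightarrow> 'z \<Rightarrow> 'x) \<Rightarrow> 'z measure \<Rightarrow> (nat \<Rightarrow> 'x measure \<Rightarrow> ('x \<times> 'b) measure)
    \<Rightarrow> 'x measure \<Rightarrow> nat \<Rightarrow> 'x measure" where
  "traj S Dx T0 PZ \<psi> \<mu> 0 = \<mu>"
| "traj S Dx T0 PZ \<psi> \<mu> (Suc k) = trans_mu S Dx T0 PZ (\<psi> k (traj S Dx T0 PZ \<psi> \<mu> k))"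

definition avg_reward :: "'x::euclidean_space set \<Rightarrow> ('x \<Rightarrow> 'b::euclidean_space set)
    \<Rightarrow> ('x \<Rightarrow> 'b \<Rightarrow> 'z \<Rightarrow> 'x) \<Rightarrow> 'z measure \<Rightarrow> ('x \<Rightarrow> 'x measure \<Rightarrow> real)
    \<Rightarrow> (nat \<Rightarrow> 'x measure \<Rightarrow> ('x \<times> 'b) measure) \<Rightarrow> 'x measure \<Rightarrow> ereal" where
  "avg_reward S Dx T0 PZ r0 \<psi> \<mu> =
     liminf (\<lambda>n. ereal ((1 / real n) * (\<Sum>k<n. rtilde S r0 (traj S Dx T0 PZ \<psi> \<mu> k))))"

definition opt_avg_reward :: "'x::euclidean_space set \<Rightarrow> ('x \<Rightarrow> 'b::euclidean_space set)
    \<Rightarrow> ('x \<Rightarrow> 'b \<Rightarrow> 'z \<Rightarrow> 'x) \<Rightarrow> 'z measure \<Rightarrow> ('x \<Rightarrow> 'x measure \<Rightarrow> real)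
    \<Rightarrow> 'x measure \<Rightarrow> ereal" where
  "opt_avg_reward S Dx T0 PZ r0 \<mu> =
     (SUP \<psi>\<in>{\<psi>. is_policy S Dx \<psi>}. avg_reward S Dx T0 PZ r0 \<psi> \<mu>)"

definition mu_kernel :: "'x::euclidean_space set \<Rightarrow> 'x measure \<Rightarrow> ('x \<Rightarrow> 'b::euclidean_space measure)
    \<Rightarrow> ('x \<times> 'b) measure" where
  "mu_kernel S \<mu> Qb = measure_of UNIV (sets borel)
     (\<lambda>B. \<integral>\<^sup>+ x. indicator S x * emeasure (Qb x) (Pair x -` B) \<partial>\<mu>)"

definition Pker :: "('x \<Rightarrow> 'b::euclidean_space set) \<Rightarrow> ('x \<Rightarrow> 'b \<Rightarrow> 'z \<Rightarrow> 'x::euclidean_space)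
    \<Rightarrow> 'z measure \<Rightarrow> ('x \<Rightarrow> 'b measure) \<Rightarrow> 'x \<Rightarrow> 'x measure" where
  "Pker Dx T0 PZ Qb x = measure_of UNIV (sets borel)
     (\<lambda>B. \<integral>\<^sup>+ a. indicator (Dx x) a * emeasure (pZ T0 PZ x a) B \<partial>(Qb x))"

primrec kpow :: "'x::euclidean_space set \<Rightarrow> ('x \<Rightarrow> 'x measure) \<Rightarrow> nat \<Rightarrow> 'x \<Rightarrow> 'x measure" where
  "kpow S P 0 x = return borel x"
| "kpow S P (Suc n) x = measure_of UNIV (sets borel)
     (\<lambda>B. \<integral>\<^sup>+ y. indicator S y * emeasure (P y) B \<partial>(kpow S P n x))"

definition wasserstein :: "'x::euclidean_space set \<Rightarrow> 'x measure \<Rightarrow> 'x measure \<Rightarrow> real" where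
  "wasserstein S \<mu> \<nu> = Sup {\<bar>(LINT x:S|\<nu>. f x) - (LINT x:S|\<mu>. f x)\<bar> | f.
      \<forall>x\<in>S. \<forall>y\<in>S. \<bar>f x - f y\<bar> \<le> dist x y}"

definition wasserstein_ergodic :: "'x::euclidean_space set \<Rightarrow> ('x \<Rightarrow> 'x measure) \<Rightarrow> bool" where
  "wasserstein_ergodic S P \<longleftrightarrow>
     (\<exists>\<rho> C. 0 < \<rho> \<and> \<rho> < 1 \<and> 0 < C \<and>
        (\<forall>n\<ge>1. \<forall>x\<in>S. \<forall>y\<in>S. x \<noteq> y \<longrightarrow>
            wasserstein S (kpow S P n x) (kpow S P n y) / dist x y \<le> C * \<rho> ^ n))"

definition stationary :: "'x::euclidean_space set \<Rightarrow> ('x \<Rightarrow> 'x measure) \<Rightarrow> 'x measure \<Rightarrow> bool" where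
  "stationary S P \<mu> \<longleftrightarrow>
     (\<forall>B\<in>sets borel. emeasure \<mu> B = (\<integral>\<^sup>+ x. indicator S x * emeasure (P x) B \<partial>\<mu>))"

end

theory Submission
  imports Defs
begin

lemma measure_of_eqM:
  assumes "sets M = sets (borel :: 'a::topological_space measure)" "\<And>B. B \<in> sets borel \<Longrightarrow> f B = emeasure M B"
  shows "measure_of UNIV (sets (borel::'a measure)) f = M"
proof -
  have "measure_of UNIV (sets (borel::'a measure)) f = measure_of UNIV (sets (borel::'a measure)) (emeasure M)"
    apply (rule measure_of_eq)
    using assms(2) sets.sigma_sets_eq[of borel] by auto
  also have "\<dots> = M"
    using measure_of_of_measure[of M] assms(1) sets_eq_imp_space_eq[OF assms(1)] by simp
  finally show ?thesis .
qed

lemma id_restrict_meas: fixes S :: "'x::euclidean_space set"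
  shows "(\<lambda>p. p) \<in> restrict_space borel S \<Otimes>\<^sub>M (borel::'b::euclidean_space measure) \<rightarrow>\<^sub>M (borel::('x\<times>'b) measure)"
proof -
  have i: "(\<lambda>x. x) \<in> restrict_space borel S \<rightarrow>\<^sub>M (borel::'x measure)"
    by (intro measurable_restrict_space1 measurable_ident_sets) simp
  have f: "(\<lambda>p. fst p) \<in> restrict_space borel S \<Otimes>\<^sub>M (borel::'b measure) \<rightarrow>\<^sub>M (borel::'x measure)"
    by (rule measurable_compose[OF measurable_fst i])
  have "(\<lambda>p. (fst p, snd p)) \<in> restrict_space borel S \<Otimes>\<^sub>M (borel::'b measure) \<rightarrow>\<^sub>M (borel \<Otimes>\<^sub>M (borel::'b measure))"
    by (intro measurable_Pair f measurable_snd)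
  then show ?thesis unfolding borel_prod by simp
qed

lemma lip_approx:
  fixes f :: "'a::metric_space \<Rightarrow> real"
  assumes S: "compact S" and fc: "continuous_on S f" and e: "\<epsilon> > 0"
  shows "\<exists>h Lc. Lc > 0 \<and> (\<forall>x\<in>S. \<forall>y\<in>S. \<bar>h x - h y\<bar> \<le> Lc * dist x y) \<and> (\<forall>x\<in>S. \<bar>f x - h x\<bar> \<le> \<epsilon>)"
proof (cases "S = {}")
  case True
  then show ?thesis by (intro exI[of _ f] exI[of _ 1]) auto
next
  case False
  have "bounded (f ` S)"
    by (intro compact_imp_bounded compact_continuous_image fc S)
  then obtain M where M: "M > 0" "\<And>x. x \<in> S \<Longrightarrow> \<bar>f x\<bar> \<le> M" by (auto simp: bounded_pos)
  have "uniformly_continuous_on S f" by (rule compact_uniformly_continuous[OF fc S])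
  then obtain d where d: "d > 0" "\<And>x x'. x \<in> S \<Longrightarrow> x' \<in> S \<Longrightarrow> dist x' x < d \<Longrightarrow> dist (f x') (f x) < \<epsilon>"
    unfolding uniformly_continuous_on_def using e by metis
  define k where "k = 2 * M / d"
  have k: "k > 0" using M d by (simp add: k_def)
  define h where "h x = Inf ((\<lambda>y. f y + k * dist x y) ` S)" for x
  have bdd: "bdd_below ((\<lambda>y. f y + k * dist x y) ` S)" for x
  proof (rule bdd_belowI2[of _ "-M"])
    fix y assume "y \<in> S"
    then show "- M \<le> f y + k * dist x y" using M(2)[of y] k by (smt (verit) zero_le_dist mult_nonneg_nonneg)
  qed
  have hle: "h x \<le> f z + k * dist x z" if "z \<in> S" for x z
    unfolding h_def by (rule cInf_lower[OF _ bdd]) (use that in auto)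
  have hge: "c \<le> h x" if "\<And>z. z \<in> S \<Longrightarrow> c \<le> f z + k * dist x z" for x c
    unfolding h_def by (rule cInf_greatest) (use that False in auto)
  have tri: "h x \<le> h y + k * dist x y" for x y
  proof -
    have "h x - k * dist x y \<le> h y"
    proof (rule hge)
      fix z assume z: "z \<in> S"
      have "h x \<le> f z + k * dist x z" by (rule hle[OF z])
      also have "\<dots> \<le> f z + k * (dist y z + dist x y)"
        using k dist_triangle[of x z y] by (simp add: dist_commute)
      finally show "h x - k * dist x y \<le> f z + k * dist y z" by (simp add: algebra_simps)
    qed
    then show ?thesis by simp
  qed
  show ?thesis
  proof (intro exI[of _ h] exI[of _ k] conjI ballI k)
    fix x y assume "x \<in> S" "y \<in> S"
    show "\<bar>h x - h y\<bar> \<le> k * dist x y"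
      using tri[of x y] tri[of y x] by (simp add: dist_commute abs_le_iff)
  next
    fix x assume x: "x \<in> S"
    have "h x \<le> f x" using hle[OF x, of x] by simp
    moreover have "f x - \<epsilon> \<le> h x"
    proof (rule hge)
      fix z assume z: "z \<in> S"
      show "f x - \<epsilon> \<le> f z + k * dist x z"
      proof (cases "dist z x < d")
        case True
        then have "dist (f z) (f x) < \<epsilon>" using d(2)[OF x z] by simp
        then show ?thesis using k by (smt (verit) dist_real_def zero_le_dist mult_nonneg_nonneg)
      next
        case False
        then have "k * d \<le> k * dist x z" using k by (simp add: dist_commute)
        moreover have "k * d = 2 * M" using d by (simp add: k_def)
        ultimately show ?thesis using M(2)[OF x] M(2)[OF z] e by linarith
      qed
    qed
    ultimately show "\<bar>f x - h x\<bar> \<le> \<epsilon>" by linarith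
  qed
qed

lemma cesaro:
  fixes a :: "nat \<Rightarrow> real"
  assumes "a \<longlonglongrightarrow> l"
  shows "(\<lambda>n. (1 / real n) * (\<Sum>k<n. a k)) \<longlonglongrightarrow> l"
proof (rule LIMSEQ_I)
  fix r :: real assume r: "0 < r"
  obtain N where N: "\<And>k. k \<ge> N \<Longrightarrow> norm (a k - l) < r / 2"
    using LIMSEQ_D[OF assms, of "r/2"] r by auto
  define B where "B = (\<Sum>k<N. \<bar>a k - l\<bar>)"
  have B0: "B \<ge> 0" unfolding B_def by (intro sum_nonneg) auto
  obtain M :: nat where M: "real M > 2 * B / r" using reals_Archimedean2 by blast
  show "\<exists>no. \<forall>n\<ge>no. norm ((1 / real n) * (\<Sum>k<n. a k) - l) < r"
  proof (intro exI[of _ "Suc (max N M)"] allI impI)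
    fix n assume n: "Suc (max N M) \<le> n"
    then have npos: "real n > 0" by simp
    have Nn: "N \<le> n" using n by simp
    have "(\<Sum>k<n. \<bar>a k - l\<bar>) = B + (\<Sum>k\<in>{N..<n}. \<bar>a k - l\<bar>)"
      unfolding B_def using Nn
      by (simp add: atLeast0LessThan[symmetric] sum.atLeastLessThan_concat)
    also have "(\<Sum>k\<in>{N..<n}. \<bar>a k - l\<bar>) \<le> of_nat (card {N..<n}) * (r / 2)"
      using N by (intro sum_bounded_above) (auto intro: less_imp_le)
    also have "of_nat (card {N..<n}) * (r / 2) \<le> real n * (r / 2)"
      using r by (intro mult_right_mono) auto
    finally have sb: "(\<Sum>k<n. \<bar>a k - l\<bar>) \<le> B + real n * (r / 2)" by simp
    have "(1 / real n) * (\<Sum>k<n. a k) - l = (1 / real n) * (\<Sum>k<n. a k - l)"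
      using npos by (simp add: sum_subtractf field_simps)
    also have "\<bar>\<dots>\<bar> = (1 / real n) * \<bar>\<Sum>k<n. a k - l\<bar>"
      using npos by (simp add: abs_mult)
    also have "\<dots> \<le> (1 / real n) * (\<Sum>k<n. \<bar>a k - l\<bar>)"
      using npos by (intro mult_left_mono sum_abs) auto
    also have "\<dots> \<le> (1 / real n) * (B + real n * (r / 2))"
      using npos sb by (intro mult_left_mono) auto
    also have "\<dots> = B / real n + r / 2" using npos by (simp add: field_simps)
    also have "B / real n < r / 2"
    proof -
      have "real n > 2 * B / r" using M n by (smt (verit) of_nat_le_iff max.cobounded2 Suc_le_eq less_imp_le_nat)
      then have "2 * B < real n * r" using r by (simp add: divide_less_eq)
      then show ?thesis using npos by (simp add: divide_less_eq mult.commute)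
    qed
    finally show "norm ((1 / real n) * (\<Sum>k<n. a k) - l) < r" by simp
  qed
qed

locale setting =
  fixes S :: "'x::euclidean_space set"
    and Dx :: "'x \<Rightarrow> 'b::euclidean_space set"
    and PZ :: "'z measure"
    and T0 :: "'x \<Rightarrow> 'b \<Rightarrow> 'z \<Rightarrow> 'x"
    and Qstar :: "'x \<Rightarrow> 'b measure"
  assumes S_compact: "compact S"
    and PZ_prob: "prob_space PZ"
    and T0_meas: "(\<lambda>((x, a), z). T0 x a z)
                    \<in> measurable (restrict_space borel (Dset S Dx) \<Otimes>\<^sub>M PZ) borel"
    and T0_range: "\<forall>(x, a)\<in>Dset S Dx. \<forall>z\<in>space PZ. T0 x a z \<in> S"
    and A0: "compact (Dset S Dx)"
    and Qstar_kernel: "(\<lambda>x. Qstar x) \<in> measurable (restrict_space borel S) (subprob_algebra borel)"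
    and Qstar_prob: "\<forall>x\<in>S. prob_space (Qstar x) \<and> emeasure (Qstar x) (Dx x) = 1"
begin

abbreviation "D \<equiv> Dset S Dx"

definition kap :: "'x \<times> 'b \<Rightarrow> 'x measure" where
  "kap y = (if y \<in> D then distr PZ borel (T0 (fst y) (snd y)) else null_measure borel)"

definition L :: "'x \<Rightarrow> ('x \<times> 'b) measure" where
  "L x = (if x \<in> S then distr (Qstar x) borel (Pair x) else null_measure borel)"

definition K :: "'x \<Rightarrow> 'x measure" where
  "K x = bind (L x) kap"

lemma D_borel: "D \<in> sets borel"
  using A0 by (simp add: compact_imp_closed)

lemma S_borel: "S \<in> sets borel"
  using S_compact by (simp add: compact_imp_closed)

lemma kap_meas: "kap \<in> borel \<rightarrow>\<^sub>M subprob_algebra borel"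
proof -
  have 1: "(\<lambda>y. distr PZ borel (T0 (fst y) (snd y))) \<in> restrict_space borel D \<rightarrow>\<^sub>M subprob_algebra borel"
  proof (rule measurable_distr2[where M=PZ])
    show "(\<lambda>(y, z). T0 (fst y) (snd y) z) \<in> restrict_space borel D \<Otimes>\<^sub>M PZ \<rightarrow>\<^sub>M borel"
    proof -
      have "(\<lambda>(y, z). T0 (fst y) (snd y) z) = (\<lambda>((x, a), z). T0 x a z)" by auto
      then show ?thesis using T0_meas by simp
    qed
    show "(\<lambda>x. PZ) \<in> restrict_space borel D \<rightarrow>\<^sub>M subprob_algebra PZ"
      using PZ_prob by (auto intro!: measurable_const simp: space_subprob_algebra prob_space_imp_subprob_space)
  qed
  show ?thesis unfolding kap_def
    apply (subst measurable_If_restrict_space_iff)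
    using D_borel 1 by (auto intro!: measurable_const)
qed

lemma L_meas: "L \<in> borel \<rightarrow>\<^sub>M subprob_algebra borel"
proof -
  have 1: "(\<lambda>x. distr (Qstar x) borel (Pair x)) \<in> restrict_space borel S \<rightarrow>\<^sub>M subprob_algebra borel"
  proof (rule measurable_distr2[where M=borel])
    have "(\<lambda>p. p) \<in> restrict_space borel S \<Otimes>\<^sub>M (borel::'b measure) \<rightarrow>\<^sub>M (borel::('x\<times>'b) measure)"
      by (rule id_restrict_meas)
    then show "(\<lambda>(x, y). Pair x y) \<in> restrict_space borel S \<Otimes>\<^sub>M (borel::'b measure) \<rightarrow>\<^sub>M borel"
      by (simp add: case_prod_beta')
    show "Qstar \<in> restrict_space borel S \<rightarrow>\<^sub>M subprob_algebra borel"
      using Qstar_kernel by simp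
  qed
  show ?thesis unfolding L_def
    apply (subst measurable_If_restrict_space_iff)
    using S_borel 1 by (auto intro!: measurable_const)
qed

lemma K_meas: "K \<in> borel \<rightarrow>\<^sub>M subprob_algebra borel"
  unfolding K_def by (rule measurable_bind2[OF L_meas kap_meas])

lemma sets_kap[simp]: "sets (kap y) = sets borel"
  using sets_kernel[OF kap_meas] by simp
lemma sets_L[simp]: "sets (L y) = sets borel"
  using sets_kernel[OF L_meas] by simp
lemma sets_K[simp]: "sets (K y) = sets borel"
  using sets_kernel[OF K_meas] by simp
lemma space_kap[simp]: "space (kap y) = UNIV"
  using sets_eq_imp_space_eq[OF sets_kap] by simp
lemma space_L[simp]: "space (L y) = UNIV"
  using sets_eq_imp_space_eq[OF sets_L] by simp
lemma space_K[simp]: "space (K y) = UNIV"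
  using sets_eq_imp_space_eq[OF sets_K] by simp

lemma sets_Qstar: "x \<in> S \<Longrightarrow> sets (Qstar x) = sets borel"
  using sets_kernel[OF Qstar_kernel] by (simp add: space_restrict_space)

lemma emeasure_K: "B \<in> sets borel \<Longrightarrow> emeasure (K x) B = (\<integral>\<^sup>+y. emeasure (kap y) B \<partial>L x)"
proof -
  have "kap \<in> L x \<rightarrow>\<^sub>M subprob_algebra borel"
    by (subst measurable_cong_sets[OF sets_L refl]) (rule kap_meas)
  then show "B \<in> sets borel \<Longrightarrow> ?thesis" unfolding K_def by (rule emeasure_bind[rotated]) auto
qed

lemma emeasure_kap: "B \<in> sets borel \<Longrightarrow> emeasure (kap y) B = indicator D y * emeasure (pZ T0 PZ (fst y) (snd y)) B"
  by (auto simp: kap_def pZ_def)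

lemma nn_integral_L: "x \<in> S \<Longrightarrow> f \<in> borel_measurable borel \<Longrightarrow> (\<integral>\<^sup>+y. f y \<partial>L x) = (\<integral>\<^sup>+a. f (x, a) \<partial>Qstar x)"
proof -
  assume x: "x \<in> S" and f: "f \<in> borel_measurable borel"
  have "Pair x \<in> (borel::'b measure) \<rightarrow>\<^sub>M borel"
    by (intro borel_measurable_continuous_onI continuous_intros)
  then have m: "Pair x \<in> Qstar x \<rightarrow>\<^sub>M borel"
    by (subst measurable_cong_sets[OF sets_Qstar[OF x] refl])
  show ?thesis unfolding L_def using x
    by (simp add: nn_integral_distr[OF m] f)
qed

lemma Pker_eq_K: "x \<in> S \<Longrightarrow> Pker Dx T0 PZ Qstar x = K x"
  unfolding Pker_def
proof (rule measure_of_eqM)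
  fix B :: "'x set" assume B: "B \<in> sets borel" and x: "x \<in> S"
  have m: "(\<lambda>y. emeasure (kap y) B) \<in> borel_measurable borel"
    using measurable_emeasure_kernel[OF kap_meas B] .
  show "(\<integral>\<^sup>+a. indicator (Dx x) a * emeasure (pZ T0 PZ x a) B \<partial>Qstar x) = emeasure (K x) B"
    unfolding emeasure_K[OF B] nn_integral_L[OF x m]
    using x by (simp add: emeasure_kap[OF B] Dset_def indicator_def)
qed simp

lemma PS_I:
  assumes "subprob_space M" "sets M = sets borel" "emeasure M S = 1"
  shows "M \<in> PS S"
proof -
  interpret subprob_space M by fact
  have sp: "space M = UNIV" using sets_eq_imp_space_eq[OF assms(2)] by simp
  have "emeasure M S \<le> emeasure M (space M)"
    using S_borel assms(2) by (intro emeasure_mono) (auto simp: sp)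
  moreover have "emeasure M (space M) \<le> 1" by (rule emeasure_space_le_1)
  ultimately have "emeasure M (space M) = 1" using assms(3) by simp
  then have "prob_space M" by (rule prob_spaceI)
  then show ?thesis using assms unfolding PS_def by simp
qed

lemma PS_D:
  assumes "M \<in> PS S"
  shows "prob_space M" "sets M = sets borel" "emeasure M S = 1" "space M = UNIV"
    "AE x in M. x \<in> S"
proof -
  show p: "prob_space M" "sets M = sets borel" "emeasure M S = 1"
    using assms unfolding PS_def by auto
  then show "space M = UNIV" using sets_eq_imp_space_eq[of M borel] by simp
  interpret prob_space M by fact
  show "AE x in M. x \<in> S"
    using p S_borel by (intro AE_prob_1) (simp add: measure_def)
qed

lemma bind_PS:
  fixes M :: "'a::topological_space measure"
  assumes M: "prob_space M" "sets M = sets borel" "E \<in> sets borel" "emeasure M E = 1"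
    and N: "N \<in> borel \<rightarrow>\<^sub>M subprob_algebra borel"
    and NS: "\<And>y. y \<in> E \<Longrightarrow> emeasure (N y) S = 1"
  shows "bind M N \<in> PS S"
proof -
  interpret prob_space M by fact
  have N': "N \<in> M \<rightarrow>\<^sub>M subprob_algebra borel"
    by (subst measurable_cong_sets[OF M(2) refl]) (rule N)
  have sp: "space M = UNIV" using sets_eq_imp_space_eq[OF M(2)] by simp
  have AE: "AE y in M. y \<in> E"
    using M by (intro AE_prob_1) (simp add: measure_def)
  show ?thesis
  proof (rule PS_I)
    show "subprob_space (bind M N)"
      by (rule subprob_space_bind[OF _ N']) (simp add: prob_space_imp_subprob_space prob_space_axioms)
    show "sets (bind M N) = sets borel"
      using sets_kernel[OF N'] by (intro sets_bind) (auto simp: sp)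
    have "emeasure (bind M N) S = (\<integral>\<^sup>+y. emeasure (N y) S \<partial>M)"
      using S_borel by (intro emeasure_bind[OF _ N']) (auto simp: sp)
    also have "\<dots> = (\<integral>\<^sup>+y. 1 \<partial>M)"
      using AE NS by (intro nn_integral_cong_AE) auto
    also have "\<dots> = 1" by (simp add: emeasure_space_1)
    finally show "emeasure (bind M N) S = 1" .
  qed
qed

lemma meas_T0_sec: "y \<in> D \<Longrightarrow> T0 (fst y) (snd y) \<in> PZ \<rightarrow>\<^sub>M borel"
proof -
  assume y: "y \<in> D"
  have "(\<lambda>(y, z). T0 (fst y) (snd y) z) \<in> restrict_space borel D \<Otimes>\<^sub>M PZ \<rightarrow>\<^sub>M borel"
  proof -
    have "(\<lambda>(y, z). T0 (fst y) (snd y) z) = (\<lambda>((x, a), z). T0 x a z)" by auto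
    then show ?thesis using T0_meas by simp
  qed
  from measurable_Pair2[OF this, of y] y show ?thesis by (simp add: space_restrict_space)
qed

lemma kap_S: "y \<in> D \<Longrightarrow> emeasure (kap y) S = 1"
proof -
  assume y: "y \<in> D"
  interpret prob_space PZ by (rule PZ_prob)
  have "emeasure (kap y) S = emeasure PZ (T0 (fst y) (snd y) -` S \<inter> space PZ)"
    using y S_borel by (simp add: kap_def emeasure_distr[OF meas_T0_sec[OF y]])
  also have "T0 (fst y) (snd y) -` S \<inter> space PZ = space PZ"
    using y T0_range by (cases y) auto
  finally show ?thesis by (simp add: emeasure_space_1)
qed

lemma Dx_sec: "x \<in> S \<Longrightarrow> Dx x = Pair x -` D"
  by (auto simp: Dset_def)

lemma Dx_borel: "x \<in> S \<Longrightarrow> Dx x \<in> sets borel"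
proof -
  assume x: "x \<in> S"
  have "Pair x \<in> (borel::'b measure) \<rightarrow>\<^sub>M borel"
    by (intro borel_measurable_continuous_onI continuous_intros)
  then have "Pair x -` D \<inter> space borel \<in> sets borel"
    using D_borel by (rule measurable_sets)
  then show ?thesis using Dx_sec[OF x] by simp
qed

lemma K_S: "x \<in> S \<Longrightarrow> emeasure (K x) S = 1"
proof -
  assume x: "x \<in> S"
  interpret prob_space "Qstar x" using Qstar_prob x by auto
  have m: "(\<lambda>y. emeasure (kap y) S) \<in> borel_measurable borel"
    using measurable_emeasure_kernel[OF kap_meas S_borel] .
  have "emeasure (K x) S = (\<integral>\<^sup>+a. emeasure (kap (x, a)) S \<partial>Qstar x)"
    unfolding emeasure_K[OF S_borel] nn_integral_L[OF x m] ..
  also have "\<dots> = (\<integral>\<^sup>+a. indicator (Dx x) a \<partial>Qstar x)"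
  proof (intro nn_integral_cong)
    fix a
    show "emeasure (kap (x, a)) S = indicator (Dx x) a"
    proof (cases "a \<in> Dx x")
      case True
      then have "(x, a) \<in> D" using x by (simp add: Dset_def)
      then show ?thesis using kap_S True by simp
    next
      case False
      then show ?thesis by (simp add: kap_def Dset_def)
    qed
  qed
  also have "\<dots> = 1"
    using x Qstar_prob Dx_borel[OF x] sets_Qstar[OF x] by simp
  finally show ?thesis .
qed

lemma K_out: "x \<notin> S \<Longrightarrow> emeasure (K x) B = 0"
proof (cases "B \<in> sets borel")
  case True
  assume "x \<notin> S"
  then show ?thesis unfolding emeasure_K[OF True] by (simp add: L_def)
next
  case False
  then show ?thesis by (simp add: emeasure_notin_sets)
qed


abbreviation "PK \<equiv> Pker Dx T0 PZ Qstar"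
abbreviation "kp n \<equiv> kpow S PK n"

lemma sets_kpow[simp]: "sets (kp n x) = sets borel"
proof (cases n)
  case 0 then show ?thesis by simp
next
  case (Suc m)
  have "sets (kp n x) = sigma_sets UNIV (sets borel)"
    unfolding Suc kpow.simps by (rule sets_measure_of) simp
  also have "\<dots> = sets borel" using sets.sigma_sets_eq[of borel] by simp
  finally show ?thesis .
qed

lemma space_kpow[simp]: "space (kp n x) = UNIV"
  using sets_eq_imp_space_eq[OF sets_kpow] by simp

lemma kpow_Suc: "kp (Suc n) x = bind (kp n x) K"
  unfolding kpow.simps
proof (rule measure_of_eqM)
  have K': "K \<in> kp n x \<rightarrow>\<^sub>M subprob_algebra borel"
    by (subst measurable_cong_sets[OF sets_kpow refl]) (rule K_meas)
  show "sets (bind (kp n x) K) = sets borel"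
    by (rule sets_bind) auto
  fix B :: "'x set" assume B: "B \<in> sets borel"
  have "emeasure (bind (kp n x) K) B = (\<integral>\<^sup>+y. emeasure (K y) B \<partial>kp n x)"
    using B by (intro emeasure_bind[OF _ K']) auto
  also have "\<dots> = (\<integral>\<^sup>+y. indicator S y * emeasure (PK y) B \<partial>kp n x)"
    by (intro nn_integral_cong) (auto simp: Pker_eq_K K_out indicator_def)
  finally show "(\<integral>\<^sup>+y. indicator S y * emeasure (PK y) B \<partial>kp n x) = emeasure (bind (kp n x) K) B" ..
qed

lemma kpow_Suc': "kp (Suc n) = (\<lambda>x. bind (kp n x) K)"
  by (rule ext) (rule kpow_Suc)

lemma kp_meas: "kp n \<in> borel \<rightarrow>\<^sub>M subprob_algebra borel"
proof (induction n)
  case 0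
  then show ?case by (simp add: return_measurable)
next
  case (Suc n)
  have "(\<lambda>x. bind (kp n x) K) \<in> borel \<rightarrow>\<^sub>M subprob_algebra borel"
    by (rule measurable_bind2[OF Suc K_meas])
  then show ?case by (simp only: kpow_Suc)
qed

lemma kp_PS: "x \<in> S \<Longrightarrow> kp n x \<in> PS S"
proof (induction n)
  case 0
  then show ?case by (intro PS_I) (auto simp: subprob_space_return S_borel)
next
  case (Suc n)
  show ?case unfolding kpow_Suc
    using PS_D[OF Suc.IH[OF Suc.prems]] S_borel K_S
    by (intro bind_PS[OF _ _ _ _ K_meas, of _ S]) auto
qed

lemma trans_mu_bind: "sets Q = sets borel \<Longrightarrow> trans_mu S Dx T0 PZ Q = bind Q kap"
  unfolding trans_mu_def
proof (rule measure_of_eqM)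
  assume Q: "sets Q = sets borel"
  have sp: "space Q = UNIV" using sets_eq_imp_space_eq[OF Q] by simp
  have k': "kap \<in> Q \<rightarrow>\<^sub>M subprob_algebra borel"
    by (subst measurable_cong_sets[OF Q refl]) (rule kap_meas)
  show "sets (bind Q kap) = sets borel"
    by (rule sets_bind) (auto simp: sp)
  fix B :: "'x set" assume B: "B \<in> sets borel"
  show "(\<integral>\<^sup>+y. indicator D y * emeasure (pZ T0 PZ (fst y) (snd y)) B \<partial>Q) = emeasure (bind Q kap) B"
    using B by (simp add: emeasure_bind[OF _ k'] sp emeasure_kap)
qed

lemma mu_kernel_bind: "sets \<mu> = sets borel \<Longrightarrow> mu_kernel S \<mu> Qstar = bind \<mu> L"
  unfolding mu_kernel_def
proof (rule measure_of_eqM)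
  assume Q: "sets \<mu> = sets borel"
  have sp: "space \<mu> = UNIV" using sets_eq_imp_space_eq[OF Q] by simp
  have k': "L \<in> \<mu> \<rightarrow>\<^sub>M subprob_algebra borel"
    by (subst measurable_cong_sets[OF Q refl]) (rule L_meas)
  show "sets (bind \<mu> L) = sets borel"
    by (rule sets_bind) (auto simp: sp)
  fix B :: "('x \<times> 'b) set" assume B: "B \<in> sets borel"
  have "Pair x \<in> (borel::'b measure) \<rightarrow>\<^sub>M borel" for x
    by (intro borel_measurable_continuous_onI continuous_intros)
  then have m: "x \<in> S \<Longrightarrow> Pair x \<in> Qstar x \<rightarrow>\<^sub>M borel" for x
    by (subst measurable_cong_sets[OF sets_Qstar refl])
  have "emeasure (L x) B = indicator S x * emeasure (Qstar x) (Pair x -` B)" for x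
  proof (cases "x \<in> S")
    case True
    have "space (Qstar x) = UNIV" using sets_eq_imp_space_eq[OF sets_Qstar[OF True]] by simp
    then show ?thesis using True B by (simp add: L_def emeasure_distr[OF m])
  qed (simp add: L_def)
  then show "(\<integral>\<^sup>+x. indicator S x * emeasure (Qstar x) (Pair x -` B) \<partial>\<mu>) = emeasure (bind \<mu> L) B"
    using B by (simp add: emeasure_bind[OF _ k'] sp)
qed

abbreviation "psistar \<equiv> (\<lambda>(n::nat) \<mu>. mu_kernel S \<mu> Qstar)"

lemma traj_star: "sets \<mu> = sets borel \<Longrightarrow> traj S Dx T0 PZ psistar \<mu> n = bind \<mu> (kp n)"
proof (induction n)
  case 0
  then show ?case by (simp add: bind_return'')
next
  case (Suc n)
  have sp: "space \<mu> = UNIV" using sets_eq_imp_space_eq[OF Suc.prems] by simp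
  have kpm: "kp n \<in> \<mu> \<rightarrow>\<^sub>M subprob_algebra borel"
    by (subst measurable_cong_sets[OF Suc.prems refl]) (rule kp_meas)
  have sb: "sets (bind \<mu> (kp n)) = sets borel"
    by (rule sets_bind) (auto simp: sp)
  have Lm: "L \<in> bind \<mu> (kp n) \<rightarrow>\<^sub>M subprob_algebra borel"
    by (subst measurable_cong_sets[OF sb refl]) (rule L_meas)
  have sb2: "sets (bind (bind \<mu> (kp n)) L) = sets borel"
    by (rule sets_bind) (auto simp: sp sb sets_eq_imp_space_eq[OF sb])
  have "traj S Dx T0 PZ psistar \<mu> (Suc n) = trans_mu S Dx T0 PZ (mu_kernel S (bind \<mu> (kp n)) Qstar)"
    using Suc by simp
  also have "\<dots> = bind (bind (bind \<mu> (kp n)) L) kap"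
    by (simp add: mu_kernel_bind[OF sb] trans_mu_bind[OF sb2])
  also have "\<dots> = bind (bind \<mu> (kp n)) K"
    unfolding K_def by (rule bind_assoc[OF Lm kap_meas])
  also have "\<dots> = bind \<mu> (\<lambda>x. bind (kp n x) K)"
    by (rule bind_assoc[OF kpm K_meas])
  also have "\<dots> = bind \<mu> (kp (Suc n))"
    by (simp only: kpow_Suc')
  finally show ?case .
qed

lemma stat_bind:
  assumes "\<mu>s \<in> PS S" "stationary S PK \<mu>s"
  shows "bind \<mu>s K = \<mu>s"
proof (rule measure_eqI)
  have Q: "sets \<mu>s = sets borel" using PS_D[OF assms(1)] by simp
  have sp: "space \<mu>s = UNIV" using sets_eq_imp_space_eq[OF Q] by simp
  have k': "K \<in> \<mu>s \<rightarrow>\<^sub>M subprob_algebra borel"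
    by (subst measurable_cong_sets[OF Q refl]) (rule K_meas)
  show sb: "sets (bind \<mu>s K) = sets \<mu>s"
    unfolding Q by (rule sets_bind) (auto simp: sp)
  fix B assume "B \<in> sets (bind \<mu>s K)"
  then have B: "B \<in> sets borel" using sb Q by simp
  have "emeasure (bind \<mu>s K) B = (\<integral>\<^sup>+x. emeasure (K x) B \<partial>\<mu>s)"
    using B by (simp add: emeasure_bind[OF _ k'] sp)
  also have "\<dots> = (\<integral>\<^sup>+x. indicator S x * emeasure (PK x) B \<partial>\<mu>s)"
    by (intro nn_integral_cong) (auto simp: Pker_eq_K K_out indicator_def)
  also have "\<dots> = emeasure \<mu>s B"
    using assms(2) B unfolding stationary_def by simp
  finally show "emeasure (bind \<mu>s K) B = emeasure \<mu>s B" .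
qed

lemma stat_kp:
  assumes "\<mu>s \<in> PS S" "stationary S PK \<mu>s"
  shows "bind \<mu>s (kp n) = \<mu>s"
proof (induction n)
  case 0
  then show ?case using PS_D[OF assms(1)] by (simp add: bind_return'')
next
  case (Suc n)
  have Q: "sets \<mu>s = sets borel" using PS_D[OF assms(1)] by simp
  have kpm: "kp n \<in> \<mu>s \<rightarrow>\<^sub>M subprob_algebra borel"
    by (subst measurable_cong_sets[OF Q refl]) (rule kp_meas)
  have "bind \<mu>s (kp (Suc n)) = bind \<mu>s (\<lambda>x. bind (kp n x) K)"
    by (simp only: kpow_Suc')
  also have "\<dots> = bind (bind \<mu>s (kp n)) K"
    by (rule bind_assoc[OF kpm K_meas, symmetric])
  also have "\<dots> = \<mu>s" using Suc stat_bind[OF assms] by simp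
  finally show ?case .
qed

lemma traj_PS:
  assumes "is_policy S Dx \<psi>" "\<mu> \<in> PS S"
  shows "traj S Dx T0 PZ \<psi> \<mu> n \<in> PS S"
proof (induction n)
  case 0
  then show ?case using assms by simp
next
  case (Suc n)
  let ?Q = "\<psi> n (traj S Dx T0 PZ \<psi> \<mu> n)"
  have "?Q \<in> Dtilde S Dx (traj S Dx T0 PZ \<psi> \<mu> n)"
    using assms(1) Suc unfolding is_policy_def by blast
  then have Q: "prob_space ?Q" "sets ?Q = sets borel" "emeasure ?Q D = 1"
    unfolding Dtilde_def PD_def by auto
  show ?case
    using Q D_borel kap_S by (simp add: trans_mu_bind bind_PS[OF _ _ _ _ kap_meas])
qed


lemma prob_from_sub:
  assumes "subprob_space M" "E \<in> sets M" "emeasure M E = 1"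
  shows "prob_space M"
proof -
  interpret subprob_space M by fact
  have "emeasure M E \<le> emeasure M (space M)"
    using assms(2) by (intro emeasure_mono) (auto dest: sets.sets_into_space)
  moreover have "emeasure M (space M) \<le> 1" by (rule emeasure_space_le_1)
  ultimately have "emeasure M (space M) = 1" using assms(3) by simp
  then show "prob_space M" by (rule prob_spaceI)
qed

lemma psistar_Dtilde:
  assumes mu: "\<mu> \<in> PS S"
  shows "mu_kernel S \<mu> Qstar \<in> Dtilde S Dx \<mu>"
proof -
  note m = PS_D[OF mu]
  interpret prob_space \<mu> by fact
  have k': "L \<in> \<mu> \<rightarrow>\<^sub>M subprob_algebra borel"
    by (subst measurable_cong_sets[OF m(2) refl]) (rule L_meas)
  have eq: "mu_kernel S \<mu> Qstar = bind \<mu> L" by (rule mu_kernel_bind[OF m(2)])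
  have sb: "sets (bind \<mu> L) = sets borel"
    by (rule sets_bind) (auto simp: m)
  have sp: "space (bind \<mu> L) = UNIV" using sets_eq_imp_space_eq[OF sb] by simp
  have LD: "emeasure (L x) D = indicator S x" for x
  proof (cases "x \<in> S")
    case True
    have "Pair x \<in> (borel::'b measure) \<rightarrow>\<^sub>M borel"
      by (intro borel_measurable_continuous_onI continuous_intros)
    then have pm: "Pair x \<in> Qstar x \<rightarrow>\<^sub>M borel"
      by (subst measurable_cong_sets[OF sets_Qstar[OF True] refl])
    have "space (Qstar x) = UNIV" using sets_eq_imp_space_eq[OF sets_Qstar[OF True]] by simp
    then have "emeasure (L x) D = emeasure (Qstar x) (Dx x)"
      using True D_borel by (simp add: L_def emeasure_distr[OF pm] Dx_sec)
    then show ?thesis using True Qstar_prob by simp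
  qed (simp add: L_def)
  have eD: "emeasure (bind \<mu> L) D = 1"
    using D_borel m S_borel by (simp add: emeasure_bind[OF _ k'] LD)
  have sub: "subprob_space (bind \<mu> L)"
    by (rule subprob_space_bind[OF _ k']) (simp add: prob_space_imp_subprob_space prob_space_axioms)
  have pr: "prob_space (bind \<mu> L)"
    using prob_from_sub[OF sub _ eD] D_borel sb by simp
  have fm: "fst \<in> (borel::('x \<times> 'b) measure) \<rightarrow>\<^sub>M borel"
    by (intro borel_measurable_continuous_onI continuous_intros)
  have fm': "fst \<in> bind \<mu> L \<rightarrow>\<^sub>M borel"
    by (subst measurable_cong_sets[OF sb refl]) (rule fm)
  have "distr (bind \<mu> L) borel fst = \<mu>"
  proof (rule measure_eqI)
    show "sets (distr (bind \<mu> L) borel fst) = sets \<mu>" using m by simp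
    fix B assume "B \<in> sets (distr (bind \<mu> L) borel fst)"
    then have B: "B \<in> sets borel" by simp
    have fB: "fst -` B \<in> sets (borel :: ('x\<times>'b) measure)"
      using measurable_sets[OF fm B] by simp
    have LB: "emeasure (L x) (fst -` B) = indicator S x * indicator B x" for x
    proof (cases "x \<in> S")
      case True
      have "Pair x \<in> (borel::'b measure) \<rightarrow>\<^sub>M borel"
        by (intro borel_measurable_continuous_onI continuous_intros)
      then have pm: "Pair x \<in> Qstar x \<rightarrow>\<^sub>M borel"
        by (subst measurable_cong_sets[OF sets_Qstar[OF True] refl])
      have spq: "space (Qstar x) = UNIV" using sets_eq_imp_space_eq[OF sets_Qstar[OF True]] by simp
      then have "emeasure (L x) (fst -` B) = emeasure (Qstar x) (Pair x -` fst -` B)"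
        using True fB by (simp add: L_def emeasure_distr[OF pm])
      also have "Pair x -` fst -` B = (if x \<in> B then UNIV else {})" by auto
      finally show ?thesis using True Qstar_prob prob_space.emeasure_space_1[of "Qstar x"] spq
        by (auto simp: indicator_def)
    qed (simp add: L_def)
    have "emeasure (distr (bind \<mu> L) borel fst) B = emeasure (bind \<mu> L) (fst -` B)"
      using B by (simp add: emeasure_distr[OF fm'] sp)
    also have "\<dots> = (\<integral>\<^sup>+x. indicator S x * indicator B x \<partial>\<mu>)"
      using fB m by (simp add: emeasure_bind[OF _ k'] LB)
    also have "\<dots> = (\<integral>\<^sup>+x. indicator B x \<partial>\<mu>)"
      using m(5) by (intro nn_integral_cong_AE) (auto simp: indicator_def)
    also have "\<dots> = emeasure \<mu> B" using B m by simp
    finally show "emeasure (distr (bind \<mu> L) borel fst) B = emeasure \<mu> B" .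
  qed
  then show ?thesis
    unfolding eq Dtilde_def PD_def using pr sb eD by simp
qed

lemma psistar_policy: "is_policy S Dx psistar"
  unfolding is_policy_def
proof (intro allI conjI ballI)
  fix n show "psistar n \<mu> \<in> Dtilde S Dx \<mu>" if "\<mu> \<in> PS S" for \<mu>
    using psistar_Dtilde[OF that] by simp
  have 1: "(\<lambda>\<mu>. bind \<mu> L) \<in> subprob_algebra borel \<rightarrow>\<^sub>M subprob_algebra borel"
    by (rule measurable_bind2[OF measurable_ident_sets[OF refl] L_meas])
  show "psistar n \<in> restrict_space (subprob_algebra borel) (PS S) \<rightarrow>\<^sub>M subprob_algebra borel"
  proof (subst measurable_cong)
    fix \<mu> assume "\<mu> \<in> space (restrict_space (subprob_algebra borel) (PS S))"
    then have "\<mu> \<in> PS S" by (simp add: space_restrict_space)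
    then show "mu_kernel S \<mu> Qstar = bind \<mu> L" using PS_D mu_kernel_bind by blast
  next
    show "(\<lambda>\<mu>. bind \<mu> L) \<in> restrict_space (subprob_algebra borel) (PS S) \<rightarrow>\<^sub>M subprob_algebra borel"
      by (rule measurable_restrict_space1[OF 1])
  qed
qed


lemma set_int_integrable:
  fixes g :: "'x \<Rightarrow> real"
  assumes "\<nu> \<in> PS S" "continuous_on S g"
  shows "integrable \<nu> (\<lambda>x. indicator S x *\<^sub>R g x)"
proof -
  note m = PS_D[OF assms(1)]
  interpret prob_space \<nu> by fact
  have "bounded (g ` S)"
    by (intro compact_imp_bounded compact_continuous_image assms S_compact)
  then obtain B where B: "\<And>x. x \<in> S \<Longrightarrow> norm (g x) \<le> B" by (auto simp: bounded_iff)
  have meas: "(\<lambda>x. indicator S x *\<^sub>R g x) \<in> borel_measurable borel"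
    by (rule borel_measurable_continuous_on_indicator[OF S_borel assms(2)])
  show ?thesis
  proof (rule integrable_const_bound[where B=B])
    show "AE x in \<nu>. norm (indicator S x *\<^sub>R g x) \<le> B"
      using m(5) by eventually_elim (use B in auto)
    show "(\<lambda>x. indicator S x *\<^sub>R g x) \<in> borel_measurable \<nu>"
      by (subst measurable_cong_sets[OF m(2) refl]) (rule meas)
  qed
qed

lemma set_int_diff_bound:
  fixes g1 g2 :: "'x \<Rightarrow> real"
  assumes "\<nu> \<in> PS S" "continuous_on S g1" "continuous_on S g2" "\<And>x. x \<in> S \<Longrightarrow> \<bar>g1 x - g2 x\<bar> \<le> M"
  shows "\<bar>(LINT x:S|\<nu>. g1 x) - (LINT x:S|\<nu>. g2 x)\<bar> \<le> M"
proof -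
  note m = PS_D[OF assms(1)]
  interpret prob_space \<nu> by fact
  have i1: "integrable \<nu> (\<lambda>x. indicator S x *\<^sub>R g1 x)" by (rule set_int_integrable[OF assms(1,2)])
  have i2: "integrable \<nu> (\<lambda>x. indicator S x *\<^sub>R g2 x)" by (rule set_int_integrable[OF assms(1,3)])
  let ?h = "\<lambda>x. indicator S x *\<^sub>R g1 x - indicator S x *\<^sub>R g2 x"
  have "(LINT x:S|\<nu>. g1 x) - (LINT x:S|\<nu>. g2 x) = (\<integral>x. ?h x \<partial>\<nu>)"
    unfolding set_lebesgue_integral_def using i1 i2 by simp
  also have "\<bar>\<dots>\<bar> \<le> (\<integral>x. \<bar>?h x\<bar> \<partial>\<nu>)" by (rule integral_abs_bound)
  also have "\<dots> \<le> (\<integral>x. M \<partial>\<nu>)"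
  proof (rule integral_mono_AE)
    show "integrable \<nu> (\<lambda>x. \<bar>?h x\<bar>)" using i1 i2 by auto
    show "integrable \<nu> (\<lambda>x. M)" by simp
    show "AE x in \<nu>. \<bar>?h x\<bar> \<le> M"
      using m(5) by eventually_elim (use assms(4) in \<open>auto simp: algebra_simps\<close>)
  qed
  also have "\<dots> = M" by (simp add: prob_space)
  finally show ?thesis .
qed

lemma set_int_const:
  assumes "\<nu> \<in> PS S"
  shows "(LINT x:S|\<nu>. (c::real)) = c"
proof -
  note m = PS_D[OF assms(1)]
  interpret prob_space \<nu> by fact
  have "measure \<nu> S = 1" using m S_borel by (simp add: measure_def)
  then show ?thesis using m S_borel by (simp add: set_lebesgue_integral_def)
qed

end

lemma int_osc:
  fixes g :: "'a \<Rightarrow> real"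
  assumes "prob_space \<nu>" "g \<in> borel_measurable \<nu>" "AE x in \<nu>. \<bar>g x - c\<bar> \<le> M"
  shows "\<bar>(\<integral>x. g x \<partial>\<nu>) - c\<bar> \<le> M"
proof -
  interpret prob_space \<nu> by fact
  have ig: "integrable \<nu> g"
  proof (rule integrable_const_bound[where B="\<bar>c\<bar> + M"])
    show "AE x in \<nu>. norm (g x) \<le> \<bar>c\<bar> + M"
      using assms(3) by eventually_elim auto
  qed (rule assms(2))
  have "(\<integral>x. g x \<partial>\<nu>) - c = (\<integral>x. g x - c \<partial>\<nu>)"
    using ig by (simp add: prob_space)
  also have "\<bar>\<dots>\<bar> \<le> (\<integral>x. \<bar>g x - c\<bar> \<partial>\<nu>)" by (rule integral_abs_bound)
  also have "\<dots> \<le> (\<integral>x. M \<partial>\<nu>)"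
    using ig assms(3) by (intro integral_mono_AE) auto
  also have "\<dots> = M" by (simp add: prob_space)
  finally show ?thesis .
qed


locale setting2 = setting S Dx PZ T0 Qstar
  for S :: "'x::euclidean_space set" and Dx :: "'x \<Rightarrow> 'b::euclidean_space set"
    and PZ :: "'z measure" and T0 and Qstar +
  fixes \<mu>s :: "'x measure" and \<rho> C :: real
  assumes mus_PS: "\<mu>s \<in> PS S"
    and mus_stat: "stationary S (Pker Dx T0 PZ Qstar) \<mu>s"
    and rho_pos: "0 < \<rho>" and rho_lt1: "\<rho> < 1" and C_pos: "0 < C"
    and erg: "\<forall>n\<ge>1. \<forall>x\<in>S. \<forall>y\<in>S. x \<noteq> y \<longrightarrow>
            wasserstein S (kpow S (Pker Dx T0 PZ Qstar) n x) (kpow S (Pker Dx T0 PZ Qstar) n y) / dist x y \<le> C * \<rho> ^ n"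
begin

lemma S_ne: "S \<noteq> {}"
  using PS_D(3)[OF mus_PS] by auto

lemma S_bounded: "bounded S" using S_compact by (rule compact_imp_bounded)

lemma lip1_cont: "\<forall>x\<in>S. \<forall>y\<in>S. \<bar>f x - f y\<bar> \<le> dist x y \<Longrightarrow> continuous_on S (f::'x \<Rightarrow> real)"
  by (rule lipschitz_on_continuous_on[of 1]) (auto simp: lipschitz_on_def dist_real_def)

lemma W_bdd:
  assumes "\<nu>1 \<in> PS S" "\<nu>2 \<in> PS S"
  shows "bdd_above {\<bar>(LINT x:S|\<nu>2. f x) - (LINT x:S|\<nu>1. f x)\<bar> | f.
      \<forall>x\<in>S. \<forall>y\<in>S. \<bar>f x - f y\<bar> \<le> dist x y}"
proof (rule bdd_aboveI, safe)
  fix f :: "'x \<Rightarrow> real" assume f: "\<forall>x\<in>S. \<forall>y\<in>S. \<bar>f x - f y\<bar> \<le> dist x y"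
  obtain y0 where y0: "y0 \<in> S" using S_ne by auto
  have b: "\<bar>(LINT x:S|\<nu>. f x) - f y0\<bar> \<le> diameter S" if "\<nu> \<in> PS S" for \<nu>
  proof -
    have "\<bar>(LINT x:S|\<nu>. f x) - (LINT x:S|\<nu>. f y0)\<bar> \<le> diameter S"
    proof (rule set_int_diff_bound[OF that lip1_cont[OF f]])
      show "continuous_on S (\<lambda>x. f y0)" by simp
      fix x assume "x \<in> S"
      then show "\<bar>f x - f y0\<bar> \<le> diameter S"
        using f y0 diameter_bounded_bound[OF S_bounded, of x y0] by force
    qed
    then show ?thesis using set_int_const[OF that] by simp
  qed
  show "\<bar>(LINT x:S|\<nu>2. f x) - (LINT x:S|\<nu>1. f x)\<bar> \<le> 2 * diameter S"
    using b[OF assms(1)] b[OF assms(2)] by linarith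
qed

lemma gn_lip1:
  assumes n: "n \<ge> 1" and f: "\<forall>x\<in>S. \<forall>y\<in>S. \<bar>f x - f y\<bar> \<le> dist x y" and xy: "x \<in> S" "y \<in> S"
  shows "\<bar>(LINT z:S|kp n x. f z) - (LINT z:S|kp n y. f z)\<bar> \<le> C * \<rho> ^ n * dist x y"
proof (cases "x = y")
  case True then show ?thesis by simp
next
  case False
  let ?W = "wasserstein S (kp n x) (kp n y)"
  have "\<bar>(LINT z:S|kp n y. f z) - (LINT z:S|kp n x. f z)\<bar> \<le> ?W"
    unfolding wasserstein_def
    by (rule cSup_upper[OF _ W_bdd[OF kp_PS[OF xy(1)] kp_PS[OF xy(2)]]]) (use f in blast)
  moreover have "?W / dist x y \<le> C * \<rho> ^ n" using erg n xy False by blast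
  then have "?W \<le> C * \<rho> ^ n * dist x y"
    using False by (simp add: divide_le_eq)
  ultimately show ?thesis by linarith
qed

lemma set_int_div: "(LINT x:A|\<nu>. (f x::real) / c) = (LINT x:A|\<nu>. f x) / c"
proof -
  have "(\<lambda>x. indicator A x *\<^sub>R (f x / c)) = (\<lambda>x. (indicator A x *\<^sub>R f x) / c)" by auto
  then show ?thesis unfolding set_lebesgue_integral_def by simp
qed

lemma gn_lip:
  assumes n: "n \<ge> 1" and Lp: "Lc > 0" and f: "\<forall>x\<in>S. \<forall>y\<in>S. \<bar>f x - f y\<bar> \<le> Lc * dist x y" and xy: "x \<in> S" "y \<in> S"
  shows "\<bar>(LINT z:S|kp n x. f z) - (LINT z:S|kp n y. f z)\<bar> \<le> Lc * (C * \<rho> ^ n * dist x y)"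
proof -
  have f': "\<forall>x\<in>S. \<forall>y\<in>S. \<bar>f x / Lc - f y / Lc\<bar> \<le> dist x y"
  proof (intro ballI)
    fix x y assume "x \<in> S" "y \<in> S"
    then have "\<bar>f x - f y\<bar> \<le> Lc * dist x y" using f by blast
    then have "\<bar>f x - f y\<bar> / Lc \<le> dist x y" using Lp by (simp add: divide_le_eq mult.commute)
    then show "\<bar>f x / Lc - f y / Lc\<bar> \<le> dist x y" using Lp by (simp add: diff_divide_distrib[symmetric])
  qed
  have "\<bar>(LINT z:S|kp n x. f z / Lc) - (LINT z:S|kp n y. f z / Lc)\<bar> \<le> C * \<rho> ^ n * dist x y"
    by (rule gn_lip1[OF n f' xy])
  then have "\<bar>(LINT z:S|kp n x. f z) - (LINT z:S|kp n y. f z)\<bar> / Lc \<le> C * \<rho> ^ n * dist x y"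
    using Lp by (simp add: set_int_div diff_divide_distrib[symmetric])
  then show ?thesis using Lp by (simp add: divide_le_eq mult.commute)
qed


lemma set_int_bind:
  fixes f :: "'x \<Rightarrow> real"
  assumes nu: "\<nu> \<in> PS S" and fc: "continuous_on S f"
  shows "(LINT x:S|bind \<nu> (kp n). f x) = (\<integral>x. (LINT z:S|kp n x. f z) \<partial>\<nu>)"
proof -
  note m = PS_D[OF nu]
  interpret prob_space \<nu> by fact
  have "bounded (f ` S)"
    by (intro compact_imp_bounded compact_continuous_image fc S_compact)
  then obtain B where B: "B > 0" "\<And>x. x \<in> S \<Longrightarrow> norm (f x) \<le> B" by (auto simp: bounded_pos)
  have meas: "(\<lambda>x. indicator S x *\<^sub>R f x) \<in> borel_measurable borel"
    by (rule borel_measurable_continuous_on_indicator[OF S_borel fc])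
  have N: "kp n \<in> \<nu> \<rightarrow>\<^sub>M subprob_algebra borel"
    by (subst measurable_cong_sets[OF m(2) refl]) (rule kp_meas)
  have "integral\<^sup>L (bind \<nu> (kp n)) (\<lambda>x. indicator S x *\<^sub>R f x)
      = (\<integral>x. integral\<^sup>L (kp n x) (\<lambda>x. indicator S x *\<^sub>R f x) \<partial>\<nu>)"
  proof (rule integral_bind[OF meas _ N])
    show "\<And>x. x \<in> space borel \<Longrightarrow> \<bar>indicator S x *\<^sub>R f x\<bar> \<le> B"
      using B by (auto simp: indicator_def)
    show "finite_measure \<nu>" by unfold_locales
    show "AE x in \<nu>. emeasure (kp n x) (space (kp n x)) \<le> ennreal 1"
      using subprob_space.emeasure_space_le_1[OF subprob_space_kernel[OF kp_meas]] by auto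
  qed
  then show ?thesis unfolding set_lebesgue_integral_def .
qed

lemma gn_meas:
  fixes f :: "'x \<Rightarrow> real"
  assumes fc: "continuous_on S f"
  shows "(\<lambda>x. (LINT z:S|kp n x. f z)) \<in> borel_measurable borel"
proof -
  have meas: "(\<lambda>x. indicator S x *\<^sub>R f x) \<in> borel_measurable borel"
    by (rule borel_measurable_continuous_on_indicator[OF S_borel fc])
  show ?thesis unfolding set_lebesgue_integral_def
    by (rule measurable_compose[OF kp_meas integral_measurable_subprob_algebra[OF meas]])
qed

lemma conv_lip:
  fixes f :: "'x \<Rightarrow> real"
  assumes mu: "\<mu> \<in> PS S" and n: "n \<ge> 1" and Lp: "Lc > 0"
    and f: "\<forall>x\<in>S. \<forall>y\<in>S. \<bar>f x - f y\<bar> \<le> Lc * dist x y"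
  shows "\<bar>(LINT x:S|bind \<mu> (kp n). f x) - (LINT x:S|\<mu>s. f x)\<bar> \<le> 2 * (Lc * (C * \<rho> ^ n * diameter S))"
proof -
  obtain y0 where y0: "y0 \<in> S" using S_ne by auto
  have fc: "continuous_on S f"
    by (rule lipschitz_on_continuous_on[of Lc]) (use f Lp in \<open>auto simp: lipschitz_on_def dist_real_def\<close>)
  have cl: "\<bar>(LINT x:S|bind \<nu> (kp n). f x) - (LINT z:S|kp n y0. f z)\<bar> \<le> Lc * (C * \<rho> ^ n * diameter S)"
    if nu: "\<nu> \<in> PS S" for \<nu>
  proof -
    note m = PS_D[OF nu]
    have "\<bar>(\<integral>x. (LINT z:S|kp n x. f z) \<partial>\<nu>) - (LINT z:S|kp n y0. f z)\<bar> \<le> Lc * (C * \<rho> ^ n * diameter S)"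
    proof (rule int_osc[OF m(1)])
      show "(\<lambda>x. (LINT z:S|kp n x. f z)) \<in> borel_measurable \<nu>"
        by (subst measurable_cong_sets[OF m(2) refl]) (rule gn_meas[OF fc])
      show "AE x in \<nu>. \<bar>(LINT z:S|kp n x. f z) - (LINT z:S|kp n y0. f z)\<bar> \<le> Lc * (C * \<rho> ^ n * diameter S)"
        using m(5)
      proof eventually_elim
        case (elim x)
        have "\<bar>(LINT z:S|kp n x. f z) - (LINT z:S|kp n y0. f z)\<bar> \<le> Lc * (C * \<rho> ^ n * dist x y0)"
          by (rule gn_lip[OF n Lp f elim y0])
        also have "\<dots> \<le> Lc * (C * \<rho> ^ n * diameter S)"
          using diameter_bounded_bound[OF S_bounded elim y0] Lp C_pos rho_pos
          by (intro mult_left_mono) auto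
        finally show ?case .
      qed
    qed
    then show ?thesis using set_int_bind[OF nu fc] by simp
  qed
  have e: "bind \<mu>s (kp n) = \<mu>s" by (rule stat_kp[OF mus_PS mus_stat])
  show ?thesis using cl[OF mu] cl[OF mus_PS] unfolding e by linarith
qed


lemma mun_PS: "\<mu> \<in> PS S \<Longrightarrow> bind \<mu> (kp n) \<in> PS S"
  using PS_D[of \<mu>] S_borel PS_D(3)[OF kp_PS]
  by (intro bind_PS[OF _ _ _ _ kp_meas, of _ S]) auto

lemma weak_conv:
  assumes mu: "\<mu> \<in> PS S"
  shows "weak_conv_on S (\<lambda>n. bind \<mu> (kp n)) \<mu>s"
  unfolding weak_conv_on_def
proof (intro allI impI LIMSEQ_I)
  fix f :: "'x \<Rightarrow> real" and r :: real
  assume fc: "continuous_on S f" and r: "0 < r"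
  define \<epsilon> where "\<epsilon> = r / 4"
  have e: "\<epsilon> > 0" using r by (simp add: \<epsilon>_def)
  obtain h Lc where hL: "Lc > 0" "\<forall>x\<in>S. \<forall>y\<in>S. \<bar>h x - h y\<bar> \<le> Lc * dist x y"
    "\<forall>x\<in>S. \<bar>f x - h x\<bar> \<le> \<epsilon>"
    using lip_approx[OF S_compact fc e] by blast
  have hc: "continuous_on S h"
    by (rule lipschitz_on_continuous_on[of Lc]) (use hL in \<open>auto simp: lipschitz_on_def dist_real_def\<close>)
  have "(\<lambda>n. 2 * (Lc * (C * \<rho> ^ n * diameter S))) \<longlonglongrightarrow> 2 * (Lc * (C * 0 * diameter S))"
    using rho_pos rho_lt1 by (intro tendsto_intros LIMSEQ_power_zero) auto
  then have "(\<lambda>n. 2 * (Lc * (C * \<rho> ^ n * diameter S))) \<longlonglongrightarrow> 0" by simp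
  then obtain no where no: "\<And>n. n \<ge> no \<Longrightarrow> norm (2 * (Lc * (C * \<rho> ^ n * diameter S)) - 0) < \<epsilon>"
    using LIMSEQ_D[OF _ e] by metis
  show "\<exists>no. \<forall>n\<ge>no. norm ((LINT x:S|bind \<mu> (kp n). f x) - (LINT x:S|\<mu>s. f x)) < r"
  proof (intro exI[of _ "max no 1"] allI impI)
    fix n assume n: "max no 1 \<le> n"
    have mn: "bind \<mu> (kp n) \<in> PS S" by (rule mun_PS[OF mu])
    have fh: "\<And>x. x \<in> S \<Longrightarrow> \<bar>f x - h x\<bar> \<le> \<epsilon>" using hL by blast
    have 1: "\<bar>(LINT x:S|bind \<mu> (kp n). f x) - (LINT x:S|bind \<mu> (kp n). h x)\<bar> \<le> \<epsilon>"
      by (rule set_int_diff_bound[OF mn fc hc fh])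
    have 2: "\<bar>(LINT x:S|\<mu>s. f x) - (LINT x:S|\<mu>s. h x)\<bar> \<le> \<epsilon>"
      by (rule set_int_diff_bound[OF mus_PS fc hc fh])
    have 3: "\<bar>(LINT x:S|bind \<mu> (kp n). h x) - (LINT x:S|\<mu>s. h x)\<bar> \<le> 2 * (Lc * (C * \<rho> ^ n * diameter S))"
      using n by (intro conv_lip[OF mu _ hL(1,2)]) auto
    have 4: "2 * (Lc * (C * \<rho> ^ n * diameter S)) < \<epsilon>" using no[of n] n by auto
    show "norm ((LINT x:S|bind \<mu> (kp n). f x) - (LINT x:S|\<mu>s. f x)) < r"
    proof -
      have r4: "r = 4 * \<epsilon>" by (simp add: \<epsilon>_def)
      show ?thesis unfolding real_norm_def r4 using 1 2 3 4 by linarith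
    qed
  qed
qed


lemma rtilde_conv:
  fixes r0 :: "'x \<Rightarrow> 'x measure \<Rightarrow> real"
  assumes A2': "\<forall>xs x \<mu>s \<mu>. (\<forall>n. xs n \<in> S \<and> \<mu>s n \<in> PS S) \<and> x \<in> S \<and> \<mu> \<in> PS S
               \<and> xs \<longlonglongrightarrow> x \<and> weak_conv_on S \<mu>s \<mu>
               \<longrightarrow> (\<lambda>n. r0 (xs n) (\<mu>s n)) \<longlonglongrightarrow> r0 x \<mu>"
    and mu: "\<mu> \<in> PS S"
  shows "(\<lambda>n. rtilde S r0 (bind \<mu> (kp n))) \<longlonglongrightarrow> rtilde S r0 \<mu>s"
proof -
  define mn where "mn n = bind \<mu> (kp n)" for n
  have mnP: "mn n \<in> PS S" for n unfolding mn_def by (rule mun_PS[OF mu])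
  have wc: "weak_conv_on S mn \<mu>s" unfolding mn_def by (rule weak_conv[OF mu])
  have cont: "continuous_on S (\<lambda>x. r0 x \<nu>)" if nu: "\<nu> \<in> PS S" for \<nu>
  proof (rule continuous_on_sequentiallyI)
    fix u a assume "\<forall>n. u n \<in> S" "a \<in> S" "u \<longlonglongrightarrow> a"
    moreover have "weak_conv_on S (\<lambda>_. \<nu>) \<nu>" unfolding weak_conv_on_def by simp
    ultimately have "(\<forall>n. u n \<in> S \<and> (\<lambda>_. \<nu>) n \<in> PS S) \<and> a \<in> S \<and> \<nu> \<in> PS S \<and> u \<longlonglongrightarrow> a \<and> weak_conv_on S (\<lambda>_. \<nu>) \<nu>"
      using nu by simp
    from A2'[rule_format, OF this] show "(\<lambda>n. r0 (u n) \<nu>) \<longlonglongrightarrow> r0 a \<nu>" .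
  qed
  have unif: "\<exists>N. \<forall>n\<ge>N. \<forall>x\<in>S. \<bar>r0 x (mn n) - r0 x \<mu>s\<bar> < e" if e: "e > 0" for e
  proof (rule ccontr)
    assume "\<not> ?thesis"
    then have "\<forall>m. \<exists>n\<ge>m. n \<in> {n. \<exists>x\<in>S. \<bar>r0 x (mn n) - r0 x \<mu>s\<bar> \<ge> e}"
      by (auto simp: not_less)
    then have "infinite {n. \<exists>x\<in>S. \<bar>r0 x (mn n) - r0 x \<mu>s\<bar> \<ge> e}"
      by (simp add: infinite_nat_iff_unbounded_le)
    then obtain \<sigma> :: "nat \<Rightarrow> nat" where sig: "strict_mono \<sigma>"
      "\<And>k. \<sigma> k \<in> {n. \<exists>x\<in>S. \<bar>r0 x (mn n) - r0 x \<mu>s\<bar> \<ge> e}"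
      using infinite_enumerate by blast
    then have "\<forall>k. \<exists>x. x \<in> S \<and> \<bar>r0 x (mn (\<sigma> k)) - r0 x \<mu>s\<bar> \<ge> e" by auto
    then obtain xk where xk: "\<And>k. xk k \<in> S" "\<And>k. \<bar>r0 (xk k) (mn (\<sigma> k)) - r0 (xk k) \<mu>s\<bar> \<ge> e"
      by metis
    obtain l \<tau> where lt: "l \<in> S" "strict_mono \<tau>" "(xk \<circ> \<tau>) \<longlonglongrightarrow> l"
      using seq_compactE[OF compact_imp_seq_compact[OF S_compact], of xk] xk(1) by blast
    have st: "strict_mono (\<sigma> \<circ> \<tau>)" using sig(1) lt(2) by (rule strict_mono_o)
    have wc2: "weak_conv_on S (\<lambda>k. mn (\<sigma> (\<tau> k))) \<mu>s"
      unfolding weak_conv_on_def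
    proof (intro allI impI)
      fix f :: "'x \<Rightarrow> real" assume "continuous_on S f"
      then have "(\<lambda>n. LINT x:S|mn n. f x) \<longlonglongrightarrow> (LINT x:S|\<mu>s. f x)"
        using wc unfolding weak_conv_on_def by blast
      from LIMSEQ_subseq_LIMSEQ[OF this st]
      show "(\<lambda>n. LINT x:S|mn (\<sigma> (\<tau> n)). f x) \<longlonglongrightarrow> (LINT x:S|\<mu>s. f x)"
        by (simp add: comp_def)
    qed
    have "(\<forall>n. (xk \<circ> \<tau>) n \<in> S \<and> (\<lambda>k. mn (\<sigma> (\<tau> k))) n \<in> PS S) \<and> l \<in> S \<and> \<mu>s \<in> PS S
        \<and> (xk \<circ> \<tau>) \<longlonglongrightarrow> l \<and> weak_conv_on S (\<lambda>k. mn (\<sigma> (\<tau> k))) \<mu>s"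
      using xk(1) mnP lt(1,3) mus_PS wc2 by simp
    from A2'[rule_format, OF this]
    have t1: "(\<lambda>k. r0 ((xk \<circ> \<tau>) k) (mn (\<sigma> (\<tau> k)))) \<longlonglongrightarrow> r0 l \<mu>s" .
    have t2: "(\<lambda>k. r0 ((xk \<circ> \<tau>) k) \<mu>s) \<longlonglongrightarrow> r0 l \<mu>s"
    proof -
      have "\<forall>x. \<forall>a\<in>S. (\<forall>n. x n \<in> S) \<and> x \<longlonglongrightarrow> a \<longrightarrow> ((\<lambda>x. r0 x \<mu>s) \<circ> x) \<longlonglongrightarrow> r0 a \<mu>s"
        using cont[OF mus_PS] unfolding continuous_on_sequentially .
      then have "((\<lambda>x. r0 x \<mu>s) \<circ> (xk \<circ> \<tau>)) \<longlonglongrightarrow> r0 l \<mu>s"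
        using lt(1,3) xk(1) by simp
      then show ?thesis by (simp add: comp_def)
    qed
    have "(\<lambda>k. r0 ((xk \<circ> \<tau>) k) (mn (\<sigma> (\<tau> k))) - r0 ((xk \<circ> \<tau>) k) \<mu>s) \<longlonglongrightarrow> r0 l \<mu>s - r0 l \<mu>s"
      by (rule tendsto_diff[OF t1 t2])
    then have "(\<lambda>k. r0 ((xk \<circ> \<tau>) k) (mn (\<sigma> (\<tau> k))) - r0 ((xk \<circ> \<tau>) k) \<mu>s) \<longlonglongrightarrow> 0" by simp
    from LIMSEQ_D[OF this e] obtain k where "norm (r0 ((xk \<circ> \<tau>) k) (mn (\<sigma> (\<tau> k))) - r0 ((xk \<circ> \<tau>) k) \<mu>s - 0) < e"
      by blast
    then show False using xk(2)[of "\<tau> k"] by simp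
  qed
  show ?thesis unfolding mn_def[symmetric]
  proof (rule LIMSEQ_I)
    fix r :: real assume r: "r > 0"
    obtain N1 where N1: "\<And>n x. n \<ge> N1 \<Longrightarrow> x \<in> S \<Longrightarrow> \<bar>r0 x (mn n) - r0 x \<mu>s\<bar> < r / 2"
      using unif[of "r/2"] r by auto
    have "(\<lambda>n. LINT x:S|mn n. r0 x \<mu>s) \<longlonglongrightarrow> (LINT x:S|\<mu>s. r0 x \<mu>s)"
      using wc cont[OF mus_PS] unfolding weak_conv_on_def by blast
    from LIMSEQ_D[OF this, of "r/2"] r
    obtain N2 where N2: "\<And>n. n \<ge> N2 \<Longrightarrow> norm ((LINT x:S|mn n. r0 x \<mu>s) - (LINT x:S|\<mu>s. r0 x \<mu>s)) < r / 2"
      by auto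
    show "\<exists>no. \<forall>n\<ge>no. norm (rtilde S r0 (mn n) - rtilde S r0 \<mu>s) < r"
    proof (intro exI[of _ "max N1 N2"] allI impI)
      fix n assume n: "max N1 N2 \<le> n"
      have 1: "\<bar>(LINT x:S|mn n. r0 x (mn n)) - (LINT x:S|mn n. r0 x \<mu>s)\<bar> \<le> r / 2"
        by (rule set_int_diff_bound[OF mnP cont[OF mnP] cont[OF mus_PS]])
           (use N1 n in \<open>auto intro: less_imp_le\<close>)
      have 2: "\<bar>(LINT x:S|mn n. r0 x \<mu>s) - (LINT x:S|\<mu>s. r0 x \<mu>s)\<bar> < r / 2"
        using N2[of n] n by simp
      show "norm (rtilde S r0 (mn n) - rtilde S r0 \<mu>s) < r"
        unfolding rtilde_def real_norm_def using 1 2 by linarith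
    qed
  qed
qed

end

theorem mainTheorem11:
  fixes S :: "'x::euclidean_space set"
    and A :: "'b::euclidean_space set"
    and Dx :: "'x \<Rightarrow> 'b set"
    and PZ :: "'z measure"
    and T0 :: "'x \<Rightarrow> 'b \<Rightarrow> 'z \<Rightarrow> 'x"
    and r0 :: "'x \<Rightarrow> 'x measure \<Rightarrow> real"
    and \<mu>star :: "'x measure"
    and Qstar :: "'x \<Rightarrow> 'b measure"
  assumes S_compact: "compact S"
    and A_borel: "A \<in> sets borel"
    and Dx_sub: "\<forall>x\<in>S. Dx x \<subseteq> A"
    and D_graph: "\<exists>g. g \<in> measurable (restrict_space borel S) borel \<and> (\<forall>x\<in>S. g x \<in> Dx x)"
    and PZ_prob: "prob_space PZ"
    and T0_meas: "(\<lambda>((x, a), z). T0 x a z)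
                    \<in> measurable (restrict_space borel (Dset S Dx) \<Otimes>\<^sub>M PZ) borel"
    and T0_range: "\<forall>(x, a)\<in>Dset S Dx. \<forall>z\<in>space PZ. T0 x a z \<in> S"
    and r0_bounded: "\<exists>B. \<forall>x\<in>S. \<forall>\<mu>\<in>PS S. \<bar>r0 x \<mu>\<bar> \<le> B"
    and A0: "compact (Dset S Dx)"
    and A1: "\<forall>xs x as. (\<forall>n. xs n \<in> S) \<and> x \<in> S \<and> xs \<longlonglongrightarrow> x \<and> (\<forall>n. as n \<in> Dx (xs n))
               \<longrightarrow> (\<exists>a\<in>Dx x. \<exists>\<sigma>::nat\<Rightarrow>nat. strict_mono \<sigma> \<and> (as \<circ> \<sigma>) \<longlonglongrightarrow> a)"
    and A2': "\<forall>xs x \<mu>s \<mu>. (\<forall>n. xs n \<in> S \<and> \<mu>s n \<in> PS S) \<and> x \<in> S \<and> \<mu> \<in> PS S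
               \<and> xs \<longlonglongrightarrow> x \<and> weak_conv_on S \<mu>s \<mu>
               \<longrightarrow> (\<lambda>n. r0 (xs n) (\<mu>s n)) \<longlonglongrightarrow> r0 x \<mu>"
    and A3: "\<forall>z\<in>space PZ. continuous_on (Dset S Dx) (\<lambda>(x, a). T0 x a z)"
    and maximizer: "\<mu>star \<in> PS S" "\<forall>\<mu>\<in>PS S. rtilde S r0 \<mu> \<le> rtilde S r0 \<mu>star"
    and Qstar_kernel: "(\<lambda>x. Qstar x) \<in> measurable (restrict_space borel S) (subprob_algebra borel)"
    and Qstar_prob: "\<forall>x\<in>S. prob_space (Qstar x) \<and> emeasure (Qstar x) (Dx x) = 1"
    and stat: "stationary S (Pker Dx T0 PZ Qstar) \<mu>star"
    and ergodic: "wasserstein_ergodic S (Pker Dx T0 PZ Qstar)"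
  shows "is_policy S Dx (\<lambda>n \<mu>. mu_kernel S \<mu> Qstar)
    \<and> (\<forall>\<mu>\<in>PS S.
         avg_reward S Dx T0 PZ r0 (\<lambda>n \<mu>. mu_kernel S \<mu> Qstar) \<mu> = ereal (rtilde S r0 \<mu>star)
       \<and> opt_avg_reward S Dx T0 PZ r0 \<mu> = ereal (rtilde S r0 \<mu>star))"
proof -
  from ergodic obtain \<rho> C where erg: "0 < \<rho>" "\<rho> < 1" "0 < C"
    "\<forall>n\<ge>1. \<forall>x\<in>S. \<forall>y\<in>S. x \<noteq> y \<longrightarrow>
            wasserstein S (kpow S (Pker Dx T0 PZ Qstar) n x) (kpow S (Pker Dx T0 PZ Qstar) n y) / dist x y \<le> C * \<rho> ^ n"
    unfolding wasserstein_ergodic_def by blast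
  have loc: "setting2 S Dx PZ T0 Qstar \<mu>star \<rho> C"
    by (intro setting2.intro setting.intro setting2_axioms.intro)
      (use S_compact PZ_prob T0_meas T0_range A0 Qstar_kernel Qstar_prob maximizer(1) stat erg in simp_all)
  interpret setting2 S Dx PZ T0 Qstar \<mu>star \<rho> C by (rule loc)
  have pol: "is_policy S Dx (\<lambda>n \<mu>. mu_kernel S \<mu> Qstar)" by (rule psistar_policy)
  have avg: "avg_reward S Dx T0 PZ r0 (\<lambda>n \<mu>. mu_kernel S \<mu> Qstar) \<mu> = ereal (rtilde S r0 \<mu>star)"
    if mu: "\<mu> \<in> PS S" for \<mu>
  proof -
    have sm: "sets \<mu> = sets borel" using PS_D[OF mu] by simp
    have eq: "(\<lambda>n. ereal ((1 / real n) * (\<Sum>k<n. rtilde S r0 (traj S Dx T0 PZ (\<lambda>n \<mu>. mu_kernel S \<mu> Qstar) \<mu> k))))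
      = (\<lambda>n. ereal ((1 / real n) * (\<Sum>k<n. rtilde S r0 (bind \<mu> (kpow S (Pker Dx T0 PZ Qstar) k)))))"
      by (simp add: traj_star[OF sm])
    have "(\<lambda>n. (1 / real n) * (\<Sum>k<n. rtilde S r0 (bind \<mu> (kpow S (Pker Dx T0 PZ Qstar) k))))
        \<longlonglongrightarrow> rtilde S r0 \<mu>star"
      by (rule cesaro[OF rtilde_conv[OF A2' mu]])
    then have "(\<lambda>n. ereal ((1 / real n) * (\<Sum>k<n. rtilde S r0 (bind \<mu> (kpow S (Pker Dx T0 PZ Qstar) k)))))
        \<longlonglongrightarrow> ereal (rtilde S r0 \<mu>star)"
      by (rule tendsto_ereal)
    then show ?thesis
      unfolding avg_reward_def eq by (intro lim_imp_Liminf) auto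
  qed
  have ub: "avg_reward S Dx T0 PZ r0 \<psi> \<mu> \<le> ereal (rtilde S r0 \<mu>star)"
    if psi: "is_policy S Dx \<psi>" and mu: "\<mu> \<in> PS S" for \<psi> \<mu>
  proof -
    let ?f = "\<lambda>n. ereal ((1 / real n) * (\<Sum>k<n. rtilde S r0 (traj S Dx T0 PZ \<psi> \<mu> k)))"
    have "eventually (\<lambda>n. ?f n \<le> ereal (rtilde S r0 \<mu>star)) sequentially"
      unfolding eventually_sequentially
    proof (intro exI[of _ 1] allI impI)
      fix n :: nat assume n: "1 \<le> n"
      have "(\<Sum>k<n. rtilde S r0 (traj S Dx T0 PZ \<psi> \<mu> k)) \<le> of_nat (card {..<n}) * rtilde S r0 \<mu>star"
        using maximizer(2) traj_PS[OF psi mu] by (intro sum_bounded_above) auto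
      then have "(\<Sum>k<n. rtilde S r0 (traj S Dx T0 PZ \<psi> \<mu> k)) \<le> real n * rtilde S r0 \<mu>star" by simp
      then have "(1 / real n) * (\<Sum>k<n. rtilde S r0 (traj S Dx T0 PZ \<psi> \<mu> k)) \<le> rtilde S r0 \<mu>star"
        using n by (simp add: divide_le_eq mult.commute)
      then show "?f n \<le> ereal (rtilde S r0 \<mu>star)" by simp
    qed
    then have "Limsup sequentially ?f \<le> ereal (rtilde S r0 \<mu>star)" by (rule Limsup_bounded)
    moreover have "Liminf sequentially ?f \<le> Limsup sequentially ?f"
      by (rule Liminf_le_Limsup) simp
    ultimately show ?thesis unfolding avg_reward_def by simp
  qed
  show ?thesis
  proof (intro conjI ballI pol)
    fix \<mu> assume mu: "\<mu> \<in> PS S"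
    show "avg_reward S Dx T0 PZ r0 (\<lambda>n \<mu>. mu_kernel S \<mu> Qstar) \<mu> = ereal (rtilde S r0 \<mu>star)"
      by (rule avg[OF mu])
    show "opt_avg_reward S Dx T0 PZ r0 \<mu> = ereal (rtilde S r0 \<mu>star)"
      unfolding opt_avg_reward_def
    proof (rule antisym)
      show "(SUP \<psi>\<in>{\<psi>. is_policy S Dx \<psi>}. avg_reward S Dx T0 PZ r0 \<psi> \<mu>) \<le> ereal (rtilde S r0 \<mu>star)"
        using ub[OF _ mu] by (intro SUP_least) auto
      have "avg_reward S Dx T0 PZ r0 (\<lambda>n \<mu>. mu_kernel S \<mu> Qstar) \<mu>
          \<le> (SUP \<psi>\<in>{\<psi>. is_policy S Dx \<psi>}. avg_reward S Dx T0 PZ r0 \<psi> \<mu>)"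
        using pol by (intro SUP_upper) auto
      then show "ereal (rtilde S r0 \<mu>star) \<le> (SUP \<psi>\<in>{\<psi>. is_policy S Dx \<psi>}. avg_reward S Dx T0 PZ r0 \<psi> \<mu>)"
        using avg[OF mu] by simp
    qed
  qed
qed

end
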